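(* Let $\mathcal{N}$ be one of $\mathcal{M}_\times$, $\mathcal{M}_\Sigma$, $\mathcal{M}$. If $\mathcal{N}\perp\Sigma$ and $\mathcal{N}\perp\mathsf{L}E$, then $\mathcal{N}\perp E$.
   Context: $\mathcal{E}$ is a locally cartesian closed category with a dominance: a class of monos (the $\Sigma$-monos) closed under pullback, identities and composition, classified by $\top:1\to\Sigma$. $\mathsf{L}E=\sum_{\phi:\Sigma}E^\phi$ is the associated partial map classifier. For a mono $m:I\to J$, $m\perp E$ means every map $I\to E$ extends uniquely along $m$; $\mathcal{N}\perp E$ means $m\perp E$ for all $m\in\mathcal{N}$. Given a class $\mathcal{M}$ of monos, $\mathcal{M}_\times$ is the smallest class of monos containing $\mathcal{M}$ and stable under products (with arbitrary objects), and $\mathcal{M}_\Sigma$ is the smallest class of monos containing $\mathcal{M}_\times$ and stable under pullback along $\Sigma$-monos. *)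

theory Defs
  imports Main
begin

record ('o, 'a) cat =
  Ob   :: "'o set"
  Ar   :: "'a set"
  dom  :: "'a \<Rightarrow> 'o"
  cod  :: "'a \<Rightarrow> 'o"
  comp :: "'a \<Rightarrow> 'a \<Rightarrow> 'a"   (* comp C g f = g o f *)
  idt  :: "'o \<Rightarrow> 'a"

definition hom :: "('o, 'a) cat \<Rightarrow> 'o \<Rightarrow> 'o \<Rightarrow> 'a set" where
  "hom C X Y = {f \<in> Ar C. dom C f = X \<and> cod C f = Y}"

definition category :: "('o, 'a) cat \<Rightarrow> bool" where
  "category C \<longleftrightarrow>
     (\<forall>f \<in> Ar C. dom C f \<in> Ob C \<and> cod C f \<in> Ob C) \<and>
     (\<forall>X \<in> Ob C. idt C X \<in> hom C X X) \<and>
     (\<forall>f g X Y Z. f \<in> hom C X Y \<longrightarrow> g \<in> hom C Y Z \<longrightarrow> comp C g f \<in> hom C X Z) \<and>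
     (\<forall>f X Y. f \<in> hom C X Y \<longrightarrow> comp C f (idt C X) = f \<and> comp C (idt C Y) f = f) \<and>
     (\<forall>f g h W X Y Z. f \<in> hom C W X \<longrightarrow> g \<in> hom C X Y \<longrightarrow> h \<in> hom C Y Z \<longrightarrow>
        comp C h (comp C g f) = comp C (comp C h g) f)"

definition mono :: "('o, 'a) cat \<Rightarrow> 'a \<Rightarrow> bool" where
  "mono C m \<longleftrightarrow> m \<in> Ar C \<and>
     (\<forall>g h X. g \<in> hom C X (dom C m) \<longrightarrow> h \<in> hom C X (dom C m) \<longrightarrow>
        comp C m g = comp C m h \<longrightarrow> g = h)"

definition terminal :: "('o, 'a) cat \<Rightarrow> 'o \<Rightarrow> bool" where
  "terminal C T \<longleftrightarrow> T \<in> Ob C \<and> (\<forall>X \<in> Ob C. \<exists>!u. u \<in> hom C X T)"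

definition is_pullback :: "('o, 'a) cat \<Rightarrow> 'a \<Rightarrow> 'a \<Rightarrow> 'a \<Rightarrow> 'a \<Rightarrow> bool" where
  "is_pullback C f g p q \<longleftrightarrow>
     f \<in> Ar C \<and> g \<in> Ar C \<and> p \<in> Ar C \<and> q \<in> Ar C \<and>
     cod C f = cod C g \<and> dom C p = dom C q \<and>
     cod C p = dom C f \<and> cod C q = dom C g \<and>
     comp C f p = comp C g q \<and>
     (\<forall>P' p' q'. p' \<in> hom C P' (dom C f) \<longrightarrow> q' \<in> hom C P' (dom C g) \<longrightarrow>
        comp C f p' = comp C g q' \<longrightarrow>
        (\<exists>!u. u \<in> hom C P' (dom C p) \<and> comp C p u = p' \<and> comp C q u = q'))"

definition is_product :: "('o, 'a) cat \<Rightarrow> 'o \<Rightarrow> 'o \<Rightarrow> 'o \<Rightarrow> 'a \<Rightarrow> 'a \<Rightarrow> bool" where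
  "is_product C X Y P p1 p2 \<longleftrightarrow>
     p1 \<in> hom C P X \<and> p2 \<in> hom C P Y \<and>
     (\<forall>Z a b. a \<in> hom C Z X \<longrightarrow> b \<in> hom C Z Y \<longrightarrow>
        (\<exists>!u. u \<in> hom C Z P \<and> comp C p1 u = a \<and> comp C p2 u = b))"

text \<open>Locally cartesian closed: finite limits (terminal object and pullbacks) and,
  for every f : A -> B, pullback along f has a right adjoint (dependent product),
  expressed by its universal property.\<close>
definition lcc :: "('o, 'a) cat \<Rightarrow> bool" where
  "lcc C \<longleftrightarrow> category C \<and>
     (\<exists>T. terminal C T) \<and>
     (\<forall>f g. f \<in> Ar C \<longrightarrow> g \<in> Ar C \<longrightarrow> cod C f = cod C g \<longrightarrow>
        (\<exists>p q. is_pullback C f g p q)) \<and>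
     (\<forall>f A B p X. f \<in> hom C A B \<longrightarrow> p \<in> hom C X A \<longrightarrow>
        (\<exists>Y q \<pi>1 \<pi>2 \<epsilon>. q \<in> hom C Y B \<and> is_pullback C f q \<pi>1 \<pi>2 \<and>
           \<epsilon> \<in> hom C (dom C \<pi>1) X \<and> comp C p \<epsilon> = \<pi>1 \<and>
           (\<forall>Z r \<rho>1 \<rho>2 h. r \<in> hom C Z B \<longrightarrow> is_pullback C f r \<rho>1 \<rho>2 \<longrightarrow>
              h \<in> hom C (dom C \<rho>1) X \<longrightarrow> comp C p h = \<rho>1 \<longrightarrow>
              (\<exists>!k. k \<in> hom C Z Y \<and> comp C q k = r \<and>
                 (\<forall>u. u \<in> hom C (dom C \<rho>1) (dom C \<pi>1) \<longrightarrow> comp C \<pi>1 u = \<rho>1 \<longrightarrow>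
                      comp C \<pi>2 u = comp C k \<rho>2 \<longrightarrow> comp C \<epsilon> u = h)))))"

text \<open>D is the class of Sigma-monos; tp : 1 -> Sig classifies it.\<close>
definition dominance :: "('o, 'a) cat \<Rightarrow> 'a set \<Rightarrow> 'o \<Rightarrow> 'a \<Rightarrow> bool" where
  "dominance C D Sig tp \<longleftrightarrow>
     terminal C (dom C tp) \<and> tp \<in> hom C (dom C tp) Sig \<and>
     (\<forall>m \<in> D. mono C m) \<and>
     (\<forall>X \<in> Ob C. idt C X \<in> D) \<and>
     (\<forall>m n. m \<in> D \<longrightarrow> n \<in> D \<longrightarrow> cod C m = dom C n \<longrightarrow> comp C n m \<in> D) \<and>
     (\<forall>m f p q. m \<in> D \<longrightarrow> is_pullback C f m p q \<longrightarrow> p \<in> D) \<and>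
     (\<forall>m. m \<in> D \<longleftrightarrow> (mono C m \<and>
          (\<exists>\<chi> t. \<chi> \<in> hom C (cod C m) Sig \<and> is_pullback C \<chi> tp m t))) \<and>
     (\<forall>m \<in> D. \<forall>\<chi> \<chi>' t t'. is_pullback C \<chi> tp m t \<longrightarrow> is_pullback C \<chi>' tp m t' \<longrightarrow>
          \<chi> = \<chi>')"

definition partial_map_classifier ::
  "('o, 'a) cat \<Rightarrow> 'a set \<Rightarrow> 'o \<Rightarrow> 'o \<Rightarrow> 'a \<Rightarrow> bool" where
  "partial_map_classifier C D E LE eta \<longleftrightarrow>
     E \<in> Ob C \<and> eta \<in> hom C E LE \<and> eta \<in> D \<and>
     (\<forall>m f. m \<in> D \<longrightarrow> f \<in> hom C (dom C m) E \<longrightarrow>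
        (\<exists>!g. g \<in> hom C (cod C m) LE \<and> is_pullback C g eta m f))"

definition orth :: "('o, 'a) cat \<Rightarrow> 'a \<Rightarrow> 'o \<Rightarrow> bool" where
  "orth C m E \<longleftrightarrow> (\<forall>f. f \<in> hom C (dom C m) E \<longrightarrow>
      (\<exists>!g. g \<in> hom C (cod C m) E \<and> comp C g m = f))"

definition orth_class :: "('o, 'a) cat \<Rightarrow> 'a set \<Rightarrow> 'o \<Rightarrow> bool" where
  "orth_class C N E \<longleftrightarrow> (\<forall>m \<in> N. orth C m E)"

text \<open>M_x: smallest class containing M and closed under products m x X with
  arbitrary objects X (for any choice of the products I x X and J x X).\<close>
inductive_set prod_closure :: "('o, 'a) cat \<Rightarrow> 'a set \<Rightarrow> 'a set"
  for C :: "('o, 'a) cat" and M :: "'a set" where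
  base: "m \<in> M \<Longrightarrow> m \<in> prod_closure C M"
| prod: "\<lbrakk> m \<in> prod_closure C M; X \<in> Ob C;
           is_product C (dom C m) X P p1 p2; is_product C (cod C m) X Q q1 q2;
           u \<in> hom C P Q; comp C q1 u = comp C m p1; comp C q2 u = p2 \<rbrakk>
         \<Longrightarrow> u \<in> prod_closure C M"

text \<open>M_Sigma: smallest class containing M_x and closed under pullback along Sigma-monos.\<close>
inductive_set sigma_closure :: "('o, 'a) cat \<Rightarrow> 'a set \<Rightarrow> 'a set \<Rightarrow> 'a set"
  for C :: "('o, 'a) cat" and D :: "'a set" and M :: "'a set" where
  base: "m \<in> prod_closure C M \<Longrightarrow> m \<in> sigma_closure C D M"
| pb: "\<lbrakk> m \<in> sigma_closure C D M; d \<in> D; is_pullback C d m p q \<rbrakk>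
         \<Longrightarrow> p \<in> sigma_closure C D M"

end

theory Submission
  imports Defs
begin

lemma prod_closure_ar:
  assumes "\<forall>m \<in> M. mono C m" shows "m \<in> prod_closure C M \<Longrightarrow> m \<in> Ar C"
  by (induction rule: prod_closure.induct) (use assms in \<open>auto simp: mono_def hom_def\<close>)

lemma sigma_closure_ar:
  assumes "\<forall>m \<in> M. mono C m" shows "m \<in> sigma_closure C D M \<Longrightarrow> m \<in> Ar C"
  by (induction rule: sigma_closure.induct)
     (use assms prod_closure_ar in \<open>auto simp: is_pullback_def\<close>)

lemma single_orth:
  assumes cat: "category C"
    and dm: "dominance C D Sig tp"
    and pmc: "partial_map_classifier C D E LE eta"
    and mA: "m \<in> Ar C"
    and oS: "orth C m Sig" and oL: "orth C m LE"
  shows "orth C m E"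
proof -
  from cat have
    ob: "\<And>f. f \<in> Ar C \<Longrightarrow> dom C f \<in> Ob C \<and> cod C f \<in> Ob C" and
    cmp: "\<And>f g X Y Z. f \<in> hom C X Y \<Longrightarrow> g \<in> hom C Y Z \<Longrightarrow> comp C g f \<in> hom C X Z" and
    asc: "\<And>f g h W X Y Z. f \<in> hom C W X \<Longrightarrow> g \<in> hom C X Y \<Longrightarrow> h \<in> hom C Y Z \<Longrightarrow>
        comp C h (comp C g f) = comp C (comp C h g) f"
    unfolding category_def by blast+
  define I where "I = dom C m"
  define J where "J = cod C m"
  define T where "T = dom C tp"
  have mh: "m \<in> hom C I J" using mA by (simp add: hom_def I_def J_def)
  have trm: "terminal C T" and tph: "tp \<in> hom C T Sig"
    using dm unfolding dominance_def T_def by auto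
  have etaD: "eta \<in> D" and etah: "eta \<in> hom C E LE"
    using pmc unfolding partial_map_classifier_def by auto
  have etamono: "mono C eta" using dm etaD unfolding dominance_def by blast
  obtain \<chi> t where chih: "\<chi> \<in> hom C LE Sig" and pb: "is_pullback C \<chi> tp eta t"
    using dm etaD etah unfolding dominance_def hom_def by blast
  have th: "t \<in> hom C E T" using pb etah unfolding is_pullback_def hom_def T_def by auto
  have chieta: "comp C \<chi> eta = comp C tp t" using pb unfolding is_pullback_def by auto
  have eta_inj: "\<And>a b X. a \<in> hom C X E \<Longrightarrow> b \<in> hom C X E \<Longrightarrow> comp C eta a = comp C eta b \<Longrightarrow> a = b"
    using etamono etah unfolding mono_def hom_def by auto
  have uniqT: "\<And>X a b. a \<in> hom C X T \<Longrightarrow> b \<in> hom C X T \<Longrightarrow> a = b"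
  proof -
    fix X a b assume a: "a \<in> hom C X T" and b: "b \<in> hom C X T"
    then have "X \<in> Ob C" using ob unfolding hom_def by auto
    then show "a = b" using trm a b unfolding terminal_def by blast
  qed
  show ?thesis unfolding orth_def
  proof (intro allI impI)
    fix f assume "f \<in> hom C (dom C m) E"
    hence fh: "f \<in> hom C I E" by (simp add: I_def)
    have ef: "comp C eta f \<in> hom C I LE" using cmp fh etah by blast
    then obtain g where gh: "g \<in> hom C J LE" and gm: "comp C g m = comp C eta f"
      using oL unfolding orth_def I_def J_def by blast
    have JOb: "J \<in> Ob C" using mA ob J_def by auto
    obtain bJ where bJ: "bJ \<in> hom C J T" using trm JOb unfolding terminal_def by blast
    have tf: "comp C t f \<in> hom C I T" using cmp fh th by blast
    have s: "comp C tp (comp C t f) \<in> hom C I Sig" using cmp tf tph by blast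
    have c1: "comp C \<chi> g \<in> hom C J Sig" using cmp gh chih by blast
    have c2: "comp C tp bJ \<in> hom C J Sig" using cmp bJ tph by blast
    have e1: "comp C (comp C \<chi> g) m = comp C tp (comp C t f)"
      using asc[OF mh gh chih] gm asc[OF fh etah chih] chieta asc[OF fh th tph] by simp
    have bm: "comp C bJ m = comp C t f" using uniqT[OF cmp[OF mh bJ] tf] .
    have e2: "comp C (comp C tp bJ) m = comp C tp (comp C t f)"
      using asc[OF mh bJ tph] bm by simp
    have eq: "comp C \<chi> g = comp C tp bJ"
      using oS s c1 c2 e1 e2 unfolding orth_def I_def J_def by blast
    have gh': "g \<in> hom C J (dom C \<chi>)" using gh chih by (simp add: hom_def)
    have bJ': "bJ \<in> hom C J (dom C tp)" using bJ by (simp add: T_def)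
    obtain u where uh: "u \<in> hom C J (dom C eta)" and ue: "comp C eta u = g"
      using pb gh' bJ' eq unfolding is_pullback_def by blast
    have uh2: "u \<in> hom C J E" using uh etah by (simp add: hom_def)
    have um: "comp C u m \<in> hom C I E" using cmp mh uh2 by blast
    have "comp C eta (comp C u m) = comp C eta f"
      using asc[OF mh uh2 etah] ue gm by simp
    hence umf: "comp C u m = f" using eta_inj um fh by blast
    show "\<exists>!g. g \<in> hom C (cod C m) E \<and> comp C g m = f"
    proof (rule ex1I[of _ u])
      show "u \<in> hom C (cod C m) E \<and> comp C u m = f" using uh2 umf J_def by simp
    next
      fix h assume h: "h \<in> hom C (cod C m) E \<and> comp C h m = f"
      hence hh: "h \<in> hom C J E" and hm: "comp C h m = f" by (auto simp: J_def)
      have a1: "comp C eta h \<in> hom C J LE" using cmp hh etah by blast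
      have a2: "comp C eta u \<in> hom C J LE" using cmp uh2 etah by blast
      have b1: "comp C (comp C eta h) m = comp C eta f" using asc[OF mh hh etah] hm by simp
      have b2: "comp C (comp C eta u) m = comp C eta f" using asc[OF mh uh2 etah] umf by simp
      have "comp C eta h = comp C eta u"
        using oL ef a1 a2 b1 b2 unfolding orth_def I_def J_def by blast
      thus "h = u" using eta_inj hh uh2 by blast
    qed
  qed
qed

theorem mainTheorem12:
  fixes C :: "('o, 'a) cat" and D M N :: "'a set" and Sig E LE :: 'o and tp eta :: 'a
  assumes "lcc C"
    and "dominance C D Sig tp"
    and "\<forall>m \<in> M. mono C m"
    and "E \<in> Ob C"
    and "partial_map_classifier C D E LE eta"
    and "N \<in> {prod_closure C M, sigma_closure C D M, M}"
    and "orth_class C N Sig"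
    and "orth_class C N LE"
  shows "orth_class C N E"
proof -
  have ar: "\<And>m. m \<in> N \<Longrightarrow> m \<in> Ar C"
    using assms(3,6) prod_closure_ar sigma_closure_ar by (auto simp: mono_def)
  have cat: "category C" using assms(1) by (simp add: lcc_def)
  show ?thesis unfolding orth_class_def
    using single_orth[OF cat assms(2) assms(5) ar] assms(7,8)
    unfolding orth_class_def by blast
qed

end
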